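(* A partial cube $G$ is affine if and only if for all vertices $u,v$ of $G$ there exist vertices $w,w'$ of $G$ with $\mathrm{conv}(w,w')=G$ (i.e. $w'=-_Gw$ is the antipode of $w$ in $G$) such that the set of $\Theta$-classes crossing $\mathrm{conv}(u,w)$ and the set of $\Theta$-classes crossing $\mathrm{conv}(v,w')$ are disjoint.
   Context: A partial cube is a graph isomorphic to an isometric subgraph of a hypercube; its edges are partitioned into $\Theta$-classes (Djoković–Winkler relation), each splitting the graph into two convex halfspaces; a $\Theta$-class crosses a subgraph if the subgraph meets both of its halfspaces. A subgraph is convex if it contains every shortest path between its vertices; $\mathrm{conv}(S)$ is the smallest convex subgraph containing $S$. For a subgraph $H$ and $x\in H$, the antipode $-_Hx$ is a vertex of $H$ with $\mathrm{conv}(x,-_Hx)=H$; a partial cube is antipodal if each of its vertices has an antipode in it. A partial cube is affine if it is isomorphic to a halfspace of some antipodal partial cube. *)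

theory Defs
  imports Main
begin

text \<open>A graph is given by a vertex set V and an adjacency relation E (only its
restriction to V matters). Subgraphs such as conv(u,w) are induced subgraphs,
represented by their vertex sets.\<close>

definition walk :: "'a set \<Rightarrow> ('a \<Rightarrow> 'a \<Rightarrow> bool) \<Rightarrow> 'a list \<Rightarrow> bool" where
  "walk V E xs \<longleftrightarrow> xs \<noteq> [] \<and> set xs \<subseteq> V \<and>
     (\<forall>i. Suc i < length xs \<longrightarrow> E (xs ! i) (xs ! Suc i))"

definition walk_betw :: "'a set \<Rightarrow> ('a \<Rightarrow> 'a \<Rightarrow> bool) \<Rightarrow> 'a \<Rightarrow> 'a \<Rightarrow> 'a list \<Rightarrow> bool" where
  "walk_betw V E u v xs \<longleftrightarrow> walk V E xs \<and> hd xs = u \<and> last xs = v"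

definition gdist :: "'a set \<Rightarrow> ('a \<Rightarrow> 'a \<Rightarrow> bool) \<Rightarrow> 'a \<Rightarrow> 'a \<Rightarrow> nat" where
  "gdist V E u v = (LEAST n. \<exists>xs. walk_betw V E u v xs \<and> length xs = Suc n)"

definition is_dist :: "'a set \<Rightarrow> ('a \<Rightarrow> 'a \<Rightarrow> bool) \<Rightarrow> 'a \<Rightarrow> 'a \<Rightarrow> nat \<Rightarrow> bool" where
  "is_dist V E u v n \<longleftrightarrow> (\<exists>xs. walk_betw V E u v xs \<and> length xs = Suc n) \<and>
     (\<forall>xs. walk_betw V E u v xs \<longrightarrow> Suc n \<le> length xs)"

text \<open>Partial cube: a finite nonempty simple graph admitting an isometric embedding
into a hypercube (vertices of hypercubes = finite sets of indices, Hamming distance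
= cardinality of symmetric difference).\<close>
definition partial_cube :: "'a set \<Rightarrow> ('a \<Rightarrow> 'a \<Rightarrow> bool) \<Rightarrow> bool" where
  "partial_cube V E \<longleftrightarrow> finite V \<and> V \<noteq> {} \<and>
     (\<forall>x\<in>V. \<not> E x x) \<and> (\<forall>x\<in>V. \<forall>y\<in>V. E x y \<longrightarrow> E y x) \<and>
     (\<exists>f :: 'a \<Rightarrow> nat set. (\<forall>x\<in>V. finite (f x)) \<and>
        (\<forall>u\<in>V. \<forall>v\<in>V. is_dist V E u v (card ((f u - f v) \<union> (f v - f u)))))"

definition graph_edges :: "'a set \<Rightarrow> ('a \<Rightarrow> 'a \<Rightarrow> bool) \<Rightarrow> 'a set set" where
  "graph_edges V E = {{x, y} | x y. x \<in> V \<and> y \<in> V \<and> E x y}"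

definition theta :: "'a set \<Rightarrow> ('a \<Rightarrow> 'a \<Rightarrow> bool) \<Rightarrow> 'a \<Rightarrow> 'a \<Rightarrow> 'a \<Rightarrow> 'a \<Rightarrow> bool" where
  "theta V E x y u v \<longleftrightarrow>
     gdist V E x u + gdist V E y v \<noteq> gdist V E x v + gdist V E y u"

definition theta_classes :: "'a set \<Rightarrow> ('a \<Rightarrow> 'a \<Rightarrow> bool) \<Rightarrow> 'a set set set" where
  "theta_classes V E =
     {{{u, v} | u v. u \<in> V \<and> v \<in> V \<and> E u v \<and> theta V E x y u v} | x y.
        x \<in> V \<and> y \<in> V \<and> E x y}"

definition halfspace :: "'a set \<Rightarrow> ('a \<Rightarrow> 'a \<Rightarrow> bool) \<Rightarrow> 'a \<Rightarrow> 'a \<Rightarrow> 'a set" where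
  "halfspace V E x y = {w \<in> V. gdist V E w x < gdist V E w y}"

definition crosses :: "'a set \<Rightarrow> ('a \<Rightarrow> 'a \<Rightarrow> bool) \<Rightarrow> 'a set set \<Rightarrow> 'a set \<Rightarrow> bool" where
  "crosses V E C S \<longleftrightarrow> (\<exists>x\<in>V. \<exists>y\<in>V. E x y \<and> {x, y} \<in> C \<and>
      S \<inter> halfspace V E x y \<noteq> {} \<and> S \<inter> halfspace V E y x \<noteq> {})"

definition convex_sub :: "'a set \<Rightarrow> ('a \<Rightarrow> 'a \<Rightarrow> bool) \<Rightarrow> 'a set \<Rightarrow> bool" where
  "convex_sub V E S \<longleftrightarrow> S \<subseteq> V \<and>
     (\<forall>u\<in>S. \<forall>v\<in>S. \<forall>xs. walk_betw V E u v xs \<and> length xs = Suc (gdist V E u v)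
        \<longrightarrow> set xs \<subseteq> S)"

definition conv :: "'a set \<Rightarrow> ('a \<Rightarrow> 'a \<Rightarrow> bool) \<Rightarrow> 'a set \<Rightarrow> 'a set" where
  "conv V E S = \<Inter> {T. convex_sub V E T \<and> S \<subseteq> T}"

definition antipodal :: "'a set \<Rightarrow> ('a \<Rightarrow> 'a \<Rightarrow> bool) \<Rightarrow> bool" where
  "antipodal V E \<longleftrightarrow> partial_cube V E \<and> (\<forall>x\<in>V. \<exists>y\<in>V. conv V E {x, y} = V)"

text \<open>Since all graphs are finite, the antipodal partial cube can be taken
with vertices in nat without loss of generality.\<close>
definition affine :: "'a set \<Rightarrow> ('a \<Rightarrow> 'a \<Rightarrow> bool) \<Rightarrow> bool" where
  "affine V E \<longleftrightarrow> (\<exists>(W :: nat set) F x y f. antipodal W F \<and> x \<in> W \<and> y \<in> W \<and> F x y \<and>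
     bij_betw f V (halfspace W F x y) \<and>
     (\<forall>a\<in>V. \<forall>b\<in>V. E a b \<longleftrightarrow> F (f a) (f b)))"

end

theory Submission
  imports Defs
begin



definition sd :: "nat set \<Rightarrow> nat set \<Rightarrow> nat set" where
  "sd A B = (A - B) \<union> (B - A)"

definition ham :: "('b \<Rightarrow> nat set) \<Rightarrow> 'b \<Rightarrow> 'b \<Rightarrow> nat" where
  "ham g a b = card (sd (g a) (g b))"

lemma sd_comm: "sd A B = sd B A" by (auto simp: sd_def)
lemma ham_comm: "ham g a b = ham g b a" by (simp add: ham_def sd_comm)
lemma sd_self[simp]: "sd A A = {}" by (auto simp: sd_def)
lemma finite_sd: "finite A \<Longrightarrow> finite B \<Longrightarrow> finite (sd A B)" by (simp add: sd_def)

lemma ham_tri: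
  assumes "finite (g a)" "finite (g b)" "finite (g c)"
  shows "ham g a c \<le> ham g a b + ham g b c"
proof -
  have "sd (g a) (g c) \<subseteq> sd (g a) (g b) \<union> sd (g b) (g c)" by (auto simp: sd_def)
  hence "card (sd (g a) (g c)) \<le> card (sd (g a) (g b) \<union> sd (g b) (g c))"
    by (intro card_mono) (use assms in \<open>auto simp: finite_sd\<close>)
  also have "\<dots> \<le> card (sd (g a) (g b)) + card (sd (g b) (g c))" by (rule card_Un_le)
  finally show ?thesis by (simp add: ham_def)
qed

lemma between_le:
  assumes "finite A" "finite B" "finite Z"
    and "card (sd A Z) + card (sd Z B) \<le> card (sd A B)"
  shows "A \<inter> B \<subseteq> Z \<and> Z \<subseteq> A \<union> B"
proof -
  let ?X = "sd A Z" and ?Y = "sd Z B"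
  have f: "finite ?X" "finite ?Y" using assms by (auto simp: finite_sd)
  have "sd A B \<subseteq> ?X \<union> ?Y" by (auto simp: sd_def)
  hence "card (sd A B) \<le> card (?X \<union> ?Y)" using f by (intro card_mono) auto
  moreover have "card (?X \<union> ?Y) + card (?X \<inter> ?Y) = card ?X + card ?Y"
    using f by (rule card_Un_Int[symmetric])
  ultimately have "card (?X \<inter> ?Y) = 0" using assms(4) by linarith
  hence "?X \<inter> ?Y = {}" using f by simp
  thus ?thesis by (auto simp: sd_def)
qed

lemma between_eq:
  assumes "finite A" "finite B" "finite Z"
    and "A \<inter> B \<subseteq> Z" "Z \<subseteq> A \<union> B"
  shows "card (sd A Z) + card (sd Z B) = card (sd A B)"
proof -
  have "sd A B = sd A Z \<union> sd Z B" "sd A Z \<inter> sd Z B = {}" using assms(4,5) by (auto simp: sd_def)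
  thus ?thesis using assms(1-3) by (metis card_Un_disjoint finite_sd)
qed

lemma walk_single[simp]: "walk V E [x] \<longleftrightarrow> x \<in> V"
  by (auto simp: walk_def)

lemma walk_Cons2[simp]: "walk V E (x # y # zs) \<longleftrightarrow> x \<in> V \<and> E x y \<and> walk V E (y # zs)"
proof
  assume w: "walk V E (x # y # zs)"
  hence "\<forall>i. Suc i < length (y#zs) \<longrightarrow> E ((y#zs) ! i) ((y#zs) ! Suc i)"
    unfolding walk_def by (metis Suc_less_eq length_Cons nth_Cons_Suc)
  with w show "x \<in> V \<and> E x y \<and> walk V E (y # zs)"
    unfolding walk_def by (metis insert_subset list.distinct(1) list.simps(15) nth_Cons_0 nth_Cons_Suc zero_less_Suc length_Cons Suc_less_eq)
next
  assume a: "x \<in> V \<and> E x y \<and> walk V E (y # zs)"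
  show "walk V E (x # y # zs)" unfolding walk_def
  proof (intro conjI allI impI)
    fix i assume i: "Suc i < length (x # y # zs)"
    show "E ((x # y # zs) ! i) ((x # y # zs) ! Suc i)"
    proof (cases i)
      case 0 thus ?thesis using a by simp
    next
      case (Suc j) thus ?thesis using a i unfolding walk_def by auto
    qed
  qed (use a in \<open>auto simp: walk_def\<close>)
qed

lemma walk_append:
  assumes "walk V E xs" "walk V E ys" "last xs = hd ys"
  shows "walk V E (xs @ tl ys)"
  using assms
proof (induction xs rule: induct_list012)
  case 1 thus ?case by (simp add: walk_def)
next
  case (2 x) thus ?case by (cases ys) auto
next
  case (3 x y zs) thus ?case by auto
qed

lemma walk_rev:
  assumes "walk V E xs" "\<forall>x\<in>V. \<forall>y\<in>V. E x y \<longrightarrow> E y x"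
  shows "walk V E (rev xs)"
  using assms(1)
proof (induction xs rule: induct_list012)
  case 1 thus ?case by (simp add: walk_def)
next
  case (2 x) thus ?case by simp
next
  case (3 x y zs)
  have r: "walk V E (rev (y # zs))" using 3 by simp
  have "y \<in> V" using 3(3) by (auto simp: walk_def)
  hence "walk V E [y, x]" using 3(3) assms(2) by auto
  from walk_append[OF r this] show ?case by simp
qed

lemma walk_map:
  assumes "walk V1 E1 ys" "\<forall>p\<in>set ys. h p \<in> V2"
    "\<forall>p\<in>set ys. \<forall>q\<in>set ys. E1 p q \<longrightarrow> E2 (h p) (h q)"
  shows "walk V2 E2 (map h ys)"
  using assms
proof (induction ys rule: induct_list012)
  case 1 thus ?case by (simp add: walk_def)
next
  case (2 x) thus ?case by simp
next
  case (3 x y zs) thus ?case by auto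
qed

lemma walk_set: "walk V E xs \<Longrightarrow> set xs \<subseteq> V" by (simp add: walk_def)

lemma chain_ham:
  assumes "\<forall>i. Suc i < length xs \<longrightarrow> ham g (xs ! i) (xs ! Suc i) \<le> 1"
    "\<forall>x\<in>set xs. finite (g x)" "i \<le> j" "j < length xs"
  shows "ham g (xs ! i) (xs ! j) \<le> j - i"
  using assms(3,4)
proof (induction j)
  case 0 thus ?case by (simp add: ham_def)
next
  case (Suc j)
  show ?case
  proof (cases "i = Suc j")
    case True thus ?thesis by (simp add: ham_def)
  next
    case False
    hence ij: "i \<le> j" using Suc by simp
    have "ham g (xs ! i) (xs ! Suc j) \<le> ham g (xs ! i) (xs ! j) + ham g (xs ! j) (xs ! Suc j)"
      by (rule ham_tri) (use assms(2) Suc in auto)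
    also have "\<dots> \<le> (j - i) + 1" using Suc ij assms(1) by (intro add_mono) auto
    finally show ?thesis using ij by simp
  qed
qed

lemma first_exit:
  assumes "P (xs ! 0)" "\<not> P (xs ! n)"
  shows "\<exists>k. Suc k \<le> n \<and> P (xs ! k) \<and> \<not> P (xs ! Suc k)"
  using assms
proof (induction n)
  case 0 thus ?case by simp
next
  case (Suc n)
  show ?case
  proof (cases "P (xs ! n)")
    case True thus ?thesis using Suc.prems by blast
  next
    case False
    then obtain k where "Suc k \<le> n \<and> P (xs ! k) \<and> \<not> P (xs ! Suc k)" using Suc by blast
    thus ?thesis by (intro exI[of _ k]) auto
  qed
qed




locale pc =
  fixes V :: "'a set" and E :: "'a \<Rightarrow> 'a \<Rightarrow> bool" and \<phi> :: "'a \<Rightarrow> nat set"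
  assumes irr: "\<forall>x\<in>V. \<not> E x x"
    and symE: "\<forall>x\<in>V. \<forall>y\<in>V. E x y \<longrightarrow> E y x"
    and finphi: "\<forall>x\<in>V. finite (\<phi> x)"
    and dist: "\<forall>u\<in>V. \<forall>v\<in>V. is_dist V E u v (ham \<phi> u v)"
begin

lemma gdist_ham: "u \<in> V \<Longrightarrow> v \<in> V \<Longrightarrow> gdist V E u v = ham \<phi> u v"
  using dist unfolding gdist_def is_dist_def
  by (intro Least_equality) (blast, metis Suc_le_mono)

lemma geo_exists: "u \<in> V \<Longrightarrow> v \<in> V \<Longrightarrow> \<exists>xs. walk_betw V E u v xs \<and> length xs = Suc (ham \<phi> u v)"
  using dist unfolding is_dist_def by blast

lemma walk_lower: "walk_betw V E u v xs \<Longrightarrow> u \<in> V \<Longrightarrow> v \<in> V \<Longrightarrow> Suc (ham \<phi> u v) \<le> length xs"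
  using dist unfolding is_dist_def by blast

lemma ham0: "u \<in> V \<Longrightarrow> v \<in> V \<Longrightarrow> ham \<phi> u v = 0 \<Longrightarrow> u = v"
  using geo_exists[of u v] unfolding walk_betw_def
  by (metis One_nat_def hd_conv_nth last_conv_nth length_0_conv length_Suc_conv lessI nat.distinct(1) nth_Cons_0 diff_Suc_1)

lemma edge_ham: assumes "u \<in> V" "v \<in> V" shows "E u v \<longleftrightarrow> ham \<phi> u v = 1"
proof
  assume e: "E u v"
  have "walk_betw V E u v [u, v]" using assms e by (simp add: walk_betw_def)
  from walk_lower[OF this assms] have "ham \<phi> u v \<le> 1" by simp
  moreover have "u \<noteq> v" using e irr assms by auto
  ultimately show "ham \<phi> u v = 1" using ham0[OF assms] by linarith
next
  assume h: "ham \<phi> u v = 1"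
  then obtain xs where xs: "walk_betw V E u v xs" "length xs = 2" using geo_exists[OF assms] by auto
  then obtain a b where "xs = [a, b]" by (metis (no_types, lifting) One_nat_def Suc_1 length_0_conv length_Suc_conv)
  thus "E u v" using xs by (auto simp: walk_betw_def)
qed

lemma walk_chain: "walk V E xs \<Longrightarrow> \<forall>i. Suc i < length xs \<longrightarrow> ham \<phi> (xs ! i) (xs ! Suc i) \<le> 1"
  unfolding walk_def using edge_ham by (metis nth_mem subsetD Suc_lessD le_refl)

lemma walk_ham_le:
  assumes "walk V E xs" "i \<le> j" "j < length xs"
  shows "ham \<phi> (xs ! i) (xs ! j) \<le> j - i"
  by (rule chain_ham[OF walk_chain[OF assms(1)] _ assms(2,3)]) (use assms(1) finphi walk_set in blast)

lemma geo_between: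
  assumes "walk_betw V E u v xs" "length xs = Suc (ham \<phi> u v)" "z \<in> set xs" "u \<in> V" "v \<in> V"
  shows "\<phi> u \<inter> \<phi> v \<subseteq> \<phi> z \<and> \<phi> z \<subseteq> \<phi> u \<union> \<phi> v"
proof -
  obtain k where k: "k < length xs" "xs ! k = z" using assms(3) by (metis in_set_conv_nth)
  have ne: "xs \<noteq> []" using assms(2) by auto
  have w: "walk V E xs" and hd: "xs ! 0 = u" and lst: "xs ! (length xs - 1) = v"
    using assms(1) ne unfolding walk_betw_def by (metis hd_conv_nth, metis hd_conv_nth, metis last_conv_nth)
  have "ham \<phi> u z \<le> k" using walk_ham_le[OF w, of 0 k] k hd by simp
  moreover have "ham \<phi> z v \<le> length xs - 1 - k" using walk_ham_le[OF w, of k "length xs - 1"] k lst by simp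
  ultimately have "ham \<phi> u z + ham \<phi> z v \<le> ham \<phi> u v" using assms(2) k by simp
  moreover have "z \<in> V" using w assms(3) walk_set by blast
  ultimately show ?thesis using between_le[of "\<phi> u" "\<phi> v" "\<phi> z"] finphi assms(4,5)
    unfolding ham_def by (simp add: sd_comm)
qed

lemma coord_convex: "convex_sub V E {z \<in> V. (i \<in> \<phi> z) = c}"
  unfolding convex_sub_def
proof (intro conjI ballI allI impI subsetI)
  fix u v xs z assume u: "u \<in> {z \<in> V. (i \<in> \<phi> z) = c}" and v: "v \<in> {z \<in> V. (i \<in> \<phi> z) = c}"
    and xs: "walk_betw V E u v xs \<and> length xs = Suc (gdist V E u v)" and z: "z \<in> set xs"
  have "z \<in> V" using xs z walk_set unfolding walk_betw_def by blast
  moreover have "\<phi> u \<inter> \<phi> v \<subseteq> \<phi> z \<and> \<phi> z \<subseteq> \<phi> u \<union> \<phi> v"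
    using geo_between[of u v xs z] xs z u v gdist_ham by auto
  ultimately show "z \<in> {z \<in> V. (i \<in> \<phi> z) = c}" using u v by auto
qed auto

lemma V_convex: "convex_sub V E V"
  unfolding convex_sub_def walk_betw_def using walk_set by blast

lemma conv_sub: "S \<subseteq> V \<Longrightarrow> conv V E S \<subseteq> V"
  unfolding conv_def using V_convex by blast

lemma conv_sup: "S \<subseteq> conv V E S"
  unfolding conv_def by blast

lemma conv_le: "convex_sub V E T \<Longrightarrow> S \<subseteq> T \<Longrightarrow> conv V E S \<subseteq> T"
  unfolding conv_def by blast

lemma interval_conv:
  assumes "u \<in> V" "v \<in> V" "z \<in> V" "ham \<phi> u z + ham \<phi> z v = ham \<phi> u v"
  shows "z \<in> conv V E {u, v}"
  unfolding conv_def
proof (rule InterI)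
  fix T assume "T \<in> {T. convex_sub V E T \<and> {u, v} \<subseteq> T}"
  hence T: "convex_sub V E T" "u \<in> T" "v \<in> T" by auto
  obtain xs where xs: "walk_betw V E u z xs" "length xs = Suc (ham \<phi> u z)" using geo_exists assms by blast
  obtain ys where ys: "walk_betw V E z v ys" "length ys = Suc (ham \<phi> z v)" using geo_exists assms by blast
  have "walk V E (xs @ tl ys)" using xs ys walk_append unfolding walk_betw_def by metis
  moreover have "hd (xs @ tl ys) = u" using xs unfolding walk_betw_def by (cases xs) auto
  moreover have "last (xs @ tl ys) = v" using xs ys unfolding walk_betw_def
    by (cases ys; cases "tl ys") auto
  moreover have "length (xs @ tl ys) = Suc (gdist V E u v)" using xs ys assms gdist_ham by simp
  ultimately have "set (xs @ tl ys) \<subseteq> T" using T unfolding convex_sub_def walk_betw_def by blast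
  moreover have "z \<in> set xs" using xs unfolding walk_betw_def
    by (metis last_in_set list.size(3) nat.distinct(1))
  ultimately show "z \<in> T" by auto
qed

lemma conv_all_sep:
  assumes "u \<in> V" "v \<in> V" "conv V E {u, v} = V" "z1 \<in> V" "z2 \<in> V" "(i \<in> \<phi> z1) \<noteq> (i \<in> \<phi> z2)"
  shows "i \<in> sd (\<phi> u) (\<phi> v)"
proof (rule ccontr)
  assume "i \<notin> sd (\<phi> u) (\<phi> v)"
  hence "{u, v} \<subseteq> {z \<in> V. (i \<in> \<phi> z) = (i \<in> \<phi> u)}" using assms(1,2) by (auto simp: sd_def)
  from conv_le[OF coord_convex this] assms show False by auto
qed

lemma edge_coord: assumes "x \<in> V" "y \<in> V" "E x y" obtains i where "sd (\<phi> x) (\<phi> y) = {i}"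
  using edge_ham[OF assms(1,2)] assms(3) unfolding ham_def by (meson card_1_singletonE)

lemma card_sd_single: "finite D \<Longrightarrow> card (sd D {i}) = (if i \<in> D then card D - 1 else Suc (card D))"
proof -
  assume "finite D"
  show ?thesis
  proof (cases "i \<in> D")
    case True hence "sd D {i} = D - {i}" by (auto simp: sd_def)
    thus ?thesis using True by simp
  next
    case False hence "sd D {i} = insert i D" by (auto simp: sd_def)
    thus ?thesis using False \<open>finite D\<close> by simp
  qed
qed

lemma phi_y: "sd (\<phi> x) (\<phi> y) = {i} \<Longrightarrow> \<phi> y = sd (\<phi> x) {i}"
  by (auto simp: sd_def)

lemma halfspace_coord:
  assumes "x \<in> V" "y \<in> V" "sd (\<phi> x) (\<phi> y) = {i}"
  shows "halfspace V E x y = {z \<in> V. (i \<in> \<phi> z) = (i \<in> \<phi> x)}"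
proof -
  have "\<And>z. z \<in> V \<Longrightarrow> (ham \<phi> z x < ham \<phi> z y) \<longleftrightarrow> (i \<in> \<phi> z) = (i \<in> \<phi> x)"
  proof -
    fix z assume z: "z \<in> V"
    let ?D = "sd (\<phi> z) (\<phi> x)"
    have fD: "finite ?D" using finphi z assms by (simp add: finite_sd)
    have "sd (\<phi> z) (\<phi> y) = sd ?D {i}" using phi_y[OF assms(3)] by (auto simp: sd_def)
    hence "ham \<phi> z y = (if i \<in> ?D then card ?D - 1 else Suc (card ?D))"
      using card_sd_single[OF fD] by (simp add: ham_def)
    moreover have "i \<in> ?D \<longleftrightarrow> (i \<in> \<phi> z) \<noteq> (i \<in> \<phi> x)" by (auto simp: sd_def)
    ultimately show "(ham \<phi> z x < ham \<phi> z y) \<longleftrightarrow> (i \<in> \<phi> z) = (i \<in> \<phi> x)"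
      unfolding ham_def by auto
  qed
  thus ?thesis unfolding halfspace_def using gdist_ham assms by auto
qed

lemma theta_coord:
  assumes "x \<in> V" "y \<in> V" "sd (\<phi> x) (\<phi> y) = {i}" "u \<in> V" "v \<in> V" "sd (\<phi> u) (\<phi> v) = {j}"
  shows "theta V E x y u v \<longleftrightarrow> i = j"
proof -
  let ?D = "sd (\<phi> x) (\<phi> u)"
  have fD: "finite ?D" using finphi assms by (simp add: finite_sd)
  have py: "\<phi> y = sd (\<phi> x) {i}" and pv: "\<phi> v = sd (\<phi> u) {j}" using phi_y assms(3,6) by auto
  have e1: "sd (\<phi> y) (\<phi> v) = sd (sd ?D {i}) {j}" unfolding py pv by (auto simp: sd_def)
  have e2: "sd (\<phi> x) (\<phi> v) = sd ?D {j}" unfolding pv by (auto simp: sd_def)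
  have e3: "sd (\<phi> y) (\<phi> u) = sd ?D {i}" unfolding py by (auto simp: sd_def)
  have fDi: "finite (sd ?D {i})" using fD by (simp add: finite_sd)
  show ?thesis
  proof (cases "i = j")
    case True
    hence "sd (sd ?D {i}) {j} = ?D" by (auto simp: sd_def)
    moreover have "card (sd ?D {i}) \<noteq> card ?D"
    proof (cases "i \<in> ?D")
      case True
      hence "0 < card ?D" using fD card_gt_0_iff by blast
      thus ?thesis using card_sd_single[OF fD, of i] True by simp
    next
      case False thus ?thesis using card_sd_single[OF fD, of i] by simp
    qed
    ultimately show ?thesis unfolding theta_def using gdist_ham assms e1 e2 e3 True
      by (simp add: ham_def)
  next
    case False
    have jD: "j \<in> sd ?D {i} \<longleftrightarrow> j \<in> ?D" using False by (auto simp: sd_def)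
    have c1: "card (sd ?D {i}) = (if i \<in> ?D then card ?D - 1 else Suc (card ?D))" by (rule card_sd_single[OF fD])
    have c2: "card (sd (sd ?D {i}) {j}) = (if j \<in> ?D then card (sd ?D {i}) - 1 else Suc (card (sd ?D {i})))"
      using card_sd_single[OF fDi, of j] jD by simp
    have c3: "card (sd ?D {j}) = (if j \<in> ?D then card ?D - 1 else Suc (card ?D))" by (rule card_sd_single[OF fD])
    have g1: "i \<in> ?D \<Longrightarrow> 1 \<le> card ?D" using fD by (metis One_nat_def Suc_leI card_gt_0_iff empty_iff)
    have g3: "j \<in> ?D \<Longrightarrow> 1 \<le> card ?D" using fD by (metis One_nat_def Suc_leI card_gt_0_iff empty_iff)
    have g2: "i \<in> ?D \<Longrightarrow> j \<in> ?D \<Longrightarrow> 2 \<le> card ?D"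
      using fD False by (metis card_2_iff card_mono empty_subsetI insert_subset)
    have "ham \<phi> x u + ham \<phi> y v = ham \<phi> x v + ham \<phi> y u"
      unfolding ham_def e1 e2 e3 c1 c2 c3 using g1 g2 g3 by (cases "i \<in> ?D"; cases "j \<in> ?D") simp_all
    thus ?thesis unfolding theta_def using gdist_ham assms False by simp
  qed
qed

end



context pc begin

lemma cross_sep:
  assumes x: "x \<in> V" "y \<in> V" "E x y" "sd (\<phi> x) (\<phi> y) = {i}"
    and C: "C = {{a, b} | a b. a \<in> V \<and> b \<in> V \<and> E a b \<and> theta V E x y a b}"
    and uw: "u \<in> V" "w \<in> V" and cr: "crosses V E C (conv V E {u, w})"
  shows "i \<in> sd (\<phi> u) (\<phi> w)"
proof (rule ccontr)
  assume ni: "i \<notin> sd (\<phi> u) (\<phi> w)"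
  obtain x' y' where x': "x' \<in> V" "y' \<in> V" "E x' y'" "{x', y'} \<in> C"
    and h1: "conv V E {u, w} \<inter> halfspace V E x' y' \<noteq> {}"
    and h2: "conv V E {u, w} \<inter> halfspace V E y' x' \<noteq> {}"
    using cr unfolding crosses_def by blast
  obtain a b where ab: "{x', y'} = {a, b}" "a \<in> V" "b \<in> V" "E a b" "theta V E x y a b"
    using x'(4) unfolding C by fastforce
  obtain j where j: "sd (\<phi> a) (\<phi> b) = {j}" using edge_coord ab by blast
  have "i = j" using theta_coord[OF x(1,2,4) ab(2,3) j] ab(5) by simp
  hence sxy: "sd (\<phi> x') (\<phi> y') = {i}" using j ab(1) by (metis doubleton_eq_iff sd_comm)
  hence sxy': "sd (\<phi> y') (\<phi> x') = {i}" by (simp add: sd_comm)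
  have "conv V E {u, w} \<subseteq> {z \<in> V. (i \<in> \<phi> z) = (i \<in> \<phi> u)}"
    by (rule conv_le[OF coord_convex]) (use ni uw in \<open>auto simp: sd_def\<close>)
  moreover obtain z1 where "z1 \<in> conv V E {u, w}" "(i \<in> \<phi> z1) = (i \<in> \<phi> x')"
    using h1 halfspace_coord[OF x'(1,2) sxy] by auto
  moreover obtain z2 where "z2 \<in> conv V E {u, w}" "(i \<in> \<phi> z2) = (i \<in> \<phi> y')"
    using h2 halfspace_coord[OF x'(2,1) sxy'] by auto
  moreover have "(i \<in> \<phi> x') \<noteq> (i \<in> \<phi> y')" using sxy by (auto simp: sd_def)
  ultimately show False by auto
qed

lemma edge_exists:
  assumes "u \<in> V" "w \<in> V" "i \<in> sd (\<phi> u) (\<phi> w)"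
  shows "\<exists>x y. x \<in> V \<and> y \<in> V \<and> E x y \<and> sd (\<phi> x) (\<phi> y) = {i}"
proof -
  obtain xs where xs: "walk_betw V E u w xs" "length xs = Suc (ham \<phi> u w)" using geo_exists assms by blast
  have ne: "xs \<noteq> []" using xs(2) by auto
  have w: "walk V E xs" and hd: "xs ! 0 = u" and lst: "xs ! (length xs - 1) = w"
    using xs(1) ne unfolding walk_betw_def by (metis hd_conv_nth, metis hd_conv_nth, metis last_conv_nth)
  have "\<not> ((i \<in> \<phi> (xs ! (length xs - 1))) = (i \<in> \<phi> u))" using lst assms(3) by (auto simp: sd_def)
  then obtain k where k: "Suc k \<le> length xs - 1" "(i \<in> \<phi> (xs ! k)) = (i \<in> \<phi> u)"
    "(i \<in> \<phi> (xs ! Suc k)) \<noteq> (i \<in> \<phi> u)"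
    using first_exit[of "\<lambda>z. (i \<in> \<phi> z) = (i \<in> \<phi> u)" xs "length xs - 1"] hd by auto
  have e: "E (xs ! k) (xs ! Suc k)" using w k(1) unfolding walk_def by auto
  have sk: "Suc k < length xs" using k(1) ne by (cases xs) auto
  have sV: "set xs \<subseteq> V" using w walk_set by blast
  have inV: "xs ! k \<in> V" "xs ! Suc k \<in> V" using sk sV nth_mem Suc_lessD by blast+
  obtain j where j: "sd (\<phi> (xs ! k)) (\<phi> (xs ! Suc k)) = {j}" using edge_coord[OF inV e] by blast
  have "i \<in> sd (\<phi> (xs ! k)) (\<phi> (xs ! Suc k))" using k(2,3) by (auto simp: sd_def)
  hence "i = j" using j by simp
  thus ?thesis using j inV e by blast
qed

lemma class_in: "x \<in> V \<Longrightarrow> y \<in> V \<Longrightarrow> E x y \<Longrightarrow>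
  {{a, b} | a b. a \<in> V \<and> b \<in> V \<and> E a b \<and> theta V E x y a b} \<in> theta_classes V E"
  unfolding theta_classes_def by blast

lemma class_crosses:
  assumes x: "x \<in> V" "y \<in> V" "E x y" "sd (\<phi> x) (\<phi> y) = {i}"
    and uw: "u \<in> V" "w \<in> V" "i \<in> sd (\<phi> u) (\<phi> w)"
  shows "crosses V E {{a, b} | a b. a \<in> V \<and> b \<in> V \<and> E a b \<and> theta V E x y a b} (conv V E {u, w})"
proof -
  have th: "theta V E x y x y" using theta_coord[OF x(1,2,4) x(1,2,4)] by simp
  have hs1: "halfspace V E x y = {z \<in> V. (i \<in> \<phi> z) = (i \<in> \<phi> x)}" by (rule halfspace_coord[OF x(1,2,4)])
  have hs2: "halfspace V E y x = {z \<in> V. (i \<in> \<phi> z) = (i \<in> \<phi> y)}"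
    by (rule halfspace_coord[OF x(2,1)]) (simp add: sd_comm x(4))
  have d: "(i \<in> \<phi> x) \<noteq> (i \<in> \<phi> y)" and d2: "(i \<in> \<phi> u) \<noteq> (i \<in> \<phi> w)"
    using x(4) uw(3) by (auto simp: sd_def)
  have "{u, w} \<subseteq> conv V E {u, w}" by (rule conv_sup)
  hence cu: "u \<in> conv V E {u, w}" "w \<in> conv V E {u, w}" by auto
  have "conv V E {u, w} \<inter> halfspace V E x y \<noteq> {}" "conv V E {u, w} \<inter> halfspace V E y x \<noteq> {}"
    unfolding hs1 hs2 using cu uw d d2 by auto
  moreover have "{x, y} \<in> {{a, b} | a b. a \<in> V \<and> b \<in> V \<and> E a b \<and> theta V E x y a b}"
    using x th by blast
  ultimately show ?thesis unfolding crosses_def using x by blast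
qed

end



lemma pc_of: assumes "partial_cube V E" shows "\<exists>f. pc V E f"
proof -
  obtain f :: "'a \<Rightarrow> nat set" where f: "\<forall>x\<in>V. finite (f x)"
    "\<forall>u\<in>V. \<forall>v\<in>V. is_dist V E u v (card ((f u - f v) \<union> (f v - f u)))"
    using assms unfolding partial_cube_def by blast
  have "pc V E f" unfolding pc_def ham_def sd_def using f assms unfolding partial_cube_def by blast
  thus ?thesis by blast
qed

lemma forward:
  assumes pcG: "partial_cube V E" and aff: "affine V E" and u: "u \<in> V" and v: "v \<in> V"
  shows "\<exists>w\<in>V. \<exists>w'\<in>V. conv V E {w, w'} = V \<and>
       {C \<in> theta_classes V E. crosses V E C (conv V E {u, w})} \<inter>
       {C \<in> theta_classes V E. crosses V E C (conv V E {v, w'})} = {}"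
proof -
  obtain W :: "nat set" and F x y f where ant: "antipodal W F" and xy: "x \<in> W" "y \<in> W" "F x y"
    and bij: "bij_betw f V (halfspace W F x y)" and adj: "\<forall>a\<in>V. \<forall>b\<in>V. E a b \<longleftrightarrow> F (f a) (f b)"
    using aff unfolding affine_def by blast
  obtain g where "pc W F g" using pc_of ant unfolding antipodal_def by blast
  interpret Wp: pc W F g by fact
  obtain j where j: "sd (g x) (g y) = {j}" using Wp.edge_coord xy by blast
  define H0 where "H0 = {z \<in> W. (j \<in> g z) = (j \<in> g x)}"
  have hs: "halfspace W F x y = H0" unfolding H0_def by (rule Wp.halfspace_coord[OF xy(1,2) j])
  have fV: "f ` V = H0" using bij hs by (simp add: bij_betw_def)
  have inj: "inj_on f V" using bij by (simp add: bij_betw_def)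
  have H0W: "H0 \<subseteq> W" unfolding H0_def by blast
  have fW: "\<And>z. z \<in> V \<Longrightarrow> f z \<in> W" using fV H0W by blast
  have fH: "\<And>z. z \<in> V \<Longrightarrow> f z \<in> H0" using fV by blast
  have H0conv: "convex_sub W F H0" unfolding H0_def by (rule Wp.coord_convex)
  let ?h = "inv_into V f"
  have hV: "\<And>p. p \<in> H0 \<Longrightarrow> ?h p \<in> V" using fV by (metis inv_into_into)
  have fh: "\<And>p. p \<in> H0 \<Longrightarrow> f (?h p) = p" using fV by (metis f_inv_into_f)
  have hf: "\<And>z. z \<in> V \<Longrightarrow> ?h (f z) = z" using inj by (metis inv_into_f_f)
  define \<psi> where "\<psi> = g \<circ> f"
  have pcG': "pc V E \<psi>"
  proof (unfold_locales)
    show "\<forall>x\<in>V. \<not> E x x" "\<forall>x\<in>V. \<forall>y\<in>V. E x y \<longrightarrow> E y x" using pcG unfolding partial_cube_def by auto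
    show "\<forall>x\<in>V. finite (\<psi> x)" unfolding \<psi>_def using fW Wp.finphi by auto
    show "\<forall>a\<in>V. \<forall>b\<in>V. is_dist V E a b (ham \<psi> a b)"
    proof (intro ballI)
      fix a b assume a: "a \<in> V" and b: "b \<in> V"
      have hab: "ham \<psi> a b = ham g (f a) (f b)" by (simp add: \<psi>_def ham_def)
      obtain ys where ys: "walk_betw W F (f a) (f b) ys" "length ys = Suc (ham g (f a) (f b))"
        using Wp.geo_exists fW a b by blast
      have sH: "set ys \<subseteq> H0" using H0conv fH[OF a] fH[OF b] ys Wp.gdist_ham[OF fW[OF a] fW[OF b]]
        unfolding convex_sub_def by metis
      have ne: "ys \<noteq> []" using ys(2) by auto
      have wm: "walk V E (map ?h ys)"
      proof (rule walk_map)
        show "walk W F ys" using ys unfolding walk_betw_def by blast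
        show "\<forall>p\<in>set ys. ?h p \<in> V" using sH hV by blast
        show "\<forall>p\<in>set ys. \<forall>q\<in>set ys. F p q \<longrightarrow> E (?h p) (?h q)"
          using sH hV fh adj by (metis subsetD)
      qed
      have "walk_betw V E a b (map ?h ys)" unfolding walk_betw_def
        using wm ys ne hf a b unfolding walk_betw_def by (simp add: hd_map last_map)
      moreover have "length (map ?h ys) = Suc (ham \<psi> a b)" using ys hab by simp
      moreover have "\<forall>xs. walk_betw V E a b xs \<longrightarrow> Suc (ham \<psi> a b) \<le> length xs"
      proof (intro allI impI)
        fix xs assume xs: "walk_betw V E a b xs"
        have "walk W F (map f xs)"
        proof (rule walk_map)
          show "walk V E xs" using xs unfolding walk_betw_def by blast
          thus "\<forall>p\<in>set xs. f p \<in> W" using fW walk_set by blast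
          show "\<forall>p\<in>set xs. \<forall>q\<in>set xs. E p q \<longrightarrow> F (f p) (f q)"
            using adj walk_set \<open>walk V E xs\<close> by blast
        qed
        moreover have "xs \<noteq> []" using xs unfolding walk_betw_def walk_def by blast
        ultimately have "walk_betw W F (f a) (f b) (map f xs)" using xs
          unfolding walk_betw_def by (simp add: hd_map last_map)
        from Wp.walk_lower[OF this fW[OF a] fW[OF b]] show "Suc (ham \<psi> a b) \<le> length xs"
          using hab by simp
      qed
      ultimately show "is_dist V E a b (ham \<psi> a b)" unfolding is_dist_def by blast
    qed
  qed
  interpret G: pc V E \<psi> by (rule pcG')
  have vary: "\<And>c d i z1 z2. c \<in> W \<Longrightarrow> d \<in> W \<Longrightarrow> conv W F {c, d} = W \<Longrightarrow> z1 \<in> W \<Longrightarrow> z2 \<in> W \<Longrightarrow>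
     (i \<in> g z1) \<noteq> (i \<in> g z2) \<Longrightarrow> i \<in> sd (g c) (g d)"
    using Wp.conv_all_sep by blast
  have jx: "(j \<in> g x) \<noteq> (j \<in> g y)" using j by (auto simp: sd_def)
  define a where "a = f u"
  define b where "b = f v"
  have aH: "a \<in> H0" and bH: "b \<in> H0" using fH u v a_def b_def by auto
  have aW: "a \<in> W" and bW: "b \<in> W" using aH bH H0W by auto
  obtain nb where nb: "nb \<in> W" "conv W F {b, nb} = W" using ant bW unfolding antipodal_def by blast
  have jb: "j \<in> sd (g b) (g nb)" using vary[OF bW nb(1) nb(2) xy(1,2) jx] .
  have nbH: "nb \<notin> H0" using bH jb unfolding H0_def by (auto simp: sd_def)
  obtain ys where ys: "walk_betw W F a nb ys" "length ys = Suc (ham g a nb)" using Wp.geo_exists aW nb by blast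
  have ne: "ys \<noteq> []" using ys(2) by auto
  have wys: "walk W F ys" and hd: "ys ! 0 = a" and lst: "ys ! (length ys - 1) = nb"
    using ys(1) ne unfolding walk_betw_def by (metis hd_conv_nth, metis hd_conv_nth, metis last_conv_nth)
  have sW: "set ys \<subseteq> W" using wys walk_set by blast
  have "\<not> (\<lambda>z. z \<in> H0) (ys ! (length ys - 1))" using lst nbH by simp
  then obtain k where k: "Suc k \<le> length ys - 1" "ys ! k \<in> H0" "ys ! Suc k \<notin> H0"
    using first_exit[of "\<lambda>z. z \<in> H0" ys "length ys - 1"] hd aH by auto
  define p where "p = ys ! k"
  define q where "q = ys ! Suc k"
  have sk: "Suc k < length ys" using k(1) ne by (cases ys) auto
  have pW: "p \<in> W" and qW: "q \<in> W" unfolding p_def q_def using sk sW nth_mem Suc_lessD by blast+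
  have pq: "F p q" using wys sk unfolding walk_def p_def q_def by blast
  have pH: "p \<in> H0" and qH: "q \<notin> H0" using k p_def q_def by auto
  obtain j' where j': "sd (g p) (g q) = {j'}" using Wp.edge_coord[OF pW qW pq] by blast
  have "j \<in> sd (g p) (g q)" using pH qH pW qW unfolding H0_def by (auto simp: sd_def)
  hence jpq: "sd (g p) (g q) = {j}" using j' by simp
  obtain nq where nq: "nq \<in> W" "conv W F {q, nq} = W" using ant qW unfolding antipodal_def by blast
  have "j \<in> sd (g q) (g nq)" using vary[OF qW nq(1) nq(2) xy(1,2) jx] .
  hence nqH: "nq \<in> H0" using qH qW nq(1) unfolding H0_def by (auto simp: sd_def)
  define w where "w = ?h p"
  define w' where "w' = ?h nq"
  have wV: "w \<in> V" and w'V: "w' \<in> V" using hV pH nqH w_def w'_def by auto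
  have fw: "f w = p" and fw': "f w' = nq" using fh pH nqH w_def w'_def by auto
  have fin: "\<And>z. z \<in> W \<Longrightarrow> finite (g z)" using Wp.finphi by blast
  have d1: "ham g a p \<le> k" using Wp.walk_ham_le[OF wys, of 0 k] sk hd p_def by simp
  have d2: "ham g p q \<le> 1" using jpq by (simp add: ham_def)
  have d3: "ham g q nb \<le> length ys - 1 - Suc k" using Wp.walk_ham_le[OF wys, of "Suc k" "length ys - 1"] sk lst q_def by simp
  have t1: "ham g a nb \<le> ham g a q + ham g q nb" by (rule ham_tri) (use fin aW qW nb in auto)
  have t2: "ham g a q \<le> ham g a p + ham g p q" by (rule ham_tri) (use fin aW qW pW in auto)
  have "ham g a q + ham g q nb \<le> ham g a nb" using d1 d2 d3 t2 ys(2) sk by linarith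
  hence btw: "g a \<inter> g nb \<subseteq> g q \<and> g q \<subseteq> g a \<union> g nb"
    using between_le[of "g a" "g nb" "g q"] fin aW qW nb(1) unfolding ham_def by (simp add: sd_comm)
  show ?thesis
  proof (intro bexI conjI)
    show "conv V E {w, w'} = V"
    proof
      show "conv V E {w, w'} \<subseteq> V" using G.conv_sub wV w'V by auto
      show "V \<subseteq> conv V E {w, w'}"
      proof
        fix z assume z: "z \<in> V"
        have fz: "f z \<in> H0" "f z \<in> W" using fH fW z by auto
        have "\<forall>i. (i \<in> g p \<and> i \<in> g nq \<longrightarrow> i \<in> g (f z)) \<and> (i \<in> g (f z) \<longrightarrow> i \<in> g p \<or> i \<in> g nq)"
        proof
          fix i
          show "(i \<in> g p \<and> i \<in> g nq \<longrightarrow> i \<in> g (f z)) \<and> (i \<in> g (f z) \<longrightarrow> i \<in> g p \<or> i \<in> g nq)"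
          proof (cases "i = j")
            case True thus ?thesis using fz pH nqH unfolding H0_def by auto
          next
            case False
            hence pqi: "(i \<in> g p) = (i \<in> g q)" using jpq by (auto simp: sd_def)
            show ?thesis
            proof (cases "(i \<in> g (f z)) = (i \<in> g p)")
              case True thus ?thesis by auto
            next
              case False
              have "i \<in> sd (g q) (g nq)" using vary[OF qW nq(1) nq(2) fz(2) pW False] .
              thus ?thesis using False pqi by (auto simp: sd_def)
            qed
          qed
        qed
        hence "g p \<inter> g nq \<subseteq> g (f z)" "g (f z) \<subseteq> g p \<union> g nq" by auto
        from between_eq[OF _ _ _ this] have "ham \<psi> w z + ham \<psi> z w' = ham \<psi> w w'"
          unfolding ham_def \<psi>_def using fw fw' fin pW nq(1) fz(2) by simp
        thus "z \<in> conv V E {w, w'}" by (rule G.interval_conv[OF wV w'V z])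
      qed
    qed
    show "{C \<in> theta_classes V E. crosses V E C (conv V E {u, w})} \<inter>
       {C \<in> theta_classes V E. crosses V E C (conv V E {v, w'})} = {}"
    proof (rule ccontr)
      assume "\<not> ?thesis"
      then obtain C where C: "C \<in> theta_classes V E" "crosses V E C (conv V E {u, w})"
        "crosses V E C (conv V E {v, w'})" by blast
      then obtain x0 y0 where x0: "x0 \<in> V" "y0 \<in> V" "E x0 y0"
        "C = {{a, b} | a b. a \<in> V \<and> b \<in> V \<and> E a b \<and> theta V E x0 y0 a b}"
        unfolding theta_classes_def by blast
      obtain i where i: "sd (\<psi> x0) (\<psi> y0) = {i}" using G.edge_coord x0 by blast
      have i1: "i \<in> sd (g a) (g p)" using G.cross_sep[OF x0(1-3) i x0(4) u wV C(2)] a_def fw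
        by (simp add: \<psi>_def)
      have i2: "i \<in> sd (g b) (g nq)" using G.cross_sep[OF x0(1-3) i x0(4) v w'V C(3)] b_def fw'
        by (simp add: \<psi>_def)
      have ij: "i \<noteq> j" using i2 bH nqH unfolding H0_def by (auto simp: sd_def)
      have pqi: "(i \<in> g p) = (i \<in> g q)" using jpq ij by (auto simp: sd_def)
      have bd: "(i \<in> g b) \<noteq> (i \<in> g nq)" using i2 by (auto simp: sd_def)
      have v1: "i \<in> sd (g q) (g nq)" using vary[OF qW nq(1) nq(2) bW nq(1) bd] .
      have v2: "i \<in> sd (g b) (g nb)" using vary[OF bW nb(1) nb(2) bW nq(1) bd] .
      show False using i1 v1 v2 bd pqi btw by (auto simp: sd_def)
    qed
  qed (use wV w'V in auto)
qed




lemma walk_lower_gen: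
  assumes "walk V E xs" "\<forall>a\<in>V. \<forall>b\<in>V. E a b \<longrightarrow> ham g a b \<le> 1" "\<forall>a\<in>V. finite (g a)"
  shows "Suc (ham g (hd xs) (last xs)) \<le> length xs"
proof -
  have ne: "xs \<noteq> []" and sV: "set xs \<subseteq> V" using assms(1) unfolding walk_def by auto
  have ch: "\<forall>i. Suc i < length xs \<longrightarrow> ham g (xs ! i) (xs ! Suc i) \<le> 1"
    using assms(1,2) sV unfolding walk_def by (metis Suc_lessD nth_mem subsetD)
  have h: "ham g (xs ! 0) (xs ! (length xs - 1)) \<le> length xs - 1 - 0"
    by (rule chain_ham[OF ch]) (use assms(3) sV ne in auto)
  have l: "0 < length xs" using ne by simp
  show ?thesis unfolding hd_conv_nth[OF ne] last_conv_nth[OF ne] using h l by linarith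
qed

lemma sd_sd_cancel: "sd (sd A C) (sd B C) = sd A B" by (auto simp: sd_def)

lemma backward:
  assumes pcG: "partial_cube V E"
    and P: "\<forall>u\<in>V. \<forall>v\<in>V. \<exists>w\<in>V. \<exists>w'\<in>V. conv V E {w, w'} = V \<and>
       {C \<in> theta_classes V E. crosses V E C (conv V E {u, w})} \<inter>
       {C \<in> theta_classes V E. crosses V E C (conv V E {v, w'})} = {}"
  shows "affine V E"
proof -
  have finV: "finite V" and neV: "V \<noteq> {}" using pcG unfolding partial_cube_def by auto
  obtain f0 where "pc V E f0" using pc_of pcG by blast
  interpret G0: pc V E f0 by fact
  obtain v0 where v0: "v0 \<in> V" using neV by blast
  define \<phi> where "\<phi> z = sd (f0 z) (f0 v0)" for z
  have hamphi: "ham \<phi> a b = ham f0 a b" for a b unfolding ham_def \<phi>_def sd_sd_cancel ..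
  have "pc V E \<phi>"
    using G0.irr G0.symE G0.finphi G0.dist v0 unfolding pc_def hamphi by (auto simp: \<phi>_def finite_sd)
  interpret G: pc V E \<phi> by fact
  define U where "U = \<Union> (\<phi> ` V)"
  have finU: "finite U" unfolding U_def using finV G.finphi by blast
  have phiU: "\<And>z. z \<in> V \<Longrightarrow> \<phi> z \<subseteq> U" unfolding U_def by blast
  have phiv0: "\<phi> v0 = {}" by (simp add: \<phi>_def)
  obtain N where NU: "N \<notin> U" using ex_new_if_finite[OF infinite_UNIV_nat finU] by blast
  obtain hb where hb: "bij_betw hb V {0..<card V}" using ex_bij_betw_finite_nat[OF finV] by blast
  have injh: "inj_on hb V" using hb by (simp add: bij_betw_def)
  define e0 where "e0 z = 2 * hb z" for z
  define e1 where "e1 z = Suc (2 * hb z)" for z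
  define W where "W = e0 ` V \<union> e1 ` V"
  define g where "g n = (if even n then \<phi> (inv_into V hb (n div 2))
     else insert N (U - \<phi> (inv_into V hb (n div 2))))" for n
  define F where "F a b = (a \<in> W \<and> b \<in> W \<and> ham g a b = 1)" for a b
  have g0: "\<And>z. z \<in> V \<Longrightarrow> g (e0 z) = \<phi> z" unfolding g_def e0_def using injh by simp
  have g1: "\<And>z. z \<in> V \<Longrightarrow> g (e1 z) = insert N (U - \<phi> z)" unfolding g_def e1_def using injh by simp
  have e01: "\<And>s t. e0 s \<noteq> e1 t" unfolding e0_def e1_def by presburger
  have inj0: "inj_on e0 V" unfolding e0_def using injh by (simp add: inj_on_def)
  have inj1: "inj_on e1 V" unfolding e1_def using injh by (simp add: inj_on_def)
  have e0W: "\<And>z. z \<in> V \<Longrightarrow> e0 z \<in> W" and e1W: "\<And>z. z \<in> V \<Longrightarrow> e1 z \<in> W" unfolding W_def by auto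
  have finU': "\<And>z. z \<in> V \<Longrightarrow> finite (\<phi> z)" using G.finphi by blast
  have h00: "\<And>s t. s \<in> V \<Longrightarrow> t \<in> V \<Longrightarrow> ham g (e0 s) (e0 t) = ham \<phi> s t"
    unfolding ham_def using g0 by simp
  have h11: "\<And>s t. s \<in> V \<Longrightarrow> t \<in> V \<Longrightarrow> ham g (e1 s) (e1 t) = ham \<phi> s t"
  proof -
    fix s t assume s: "s \<in> V" and t: "t \<in> V"
    have "sd (insert N (U - \<phi> s)) (insert N (U - \<phi> t)) = sd (\<phi> s) (\<phi> t)"
      using phiU[OF s] phiU[OF t] NU by (auto simp: sd_def)
    thus "ham g (e1 s) (e1 t) = ham \<phi> s t" unfolding ham_def using g1 s t by simp
  qed
  have h01: "\<And>s t. s \<in> V \<Longrightarrow> t \<in> V \<Longrightarrow> ham g (e0 s) (e1 t) = Suc (card (sd (\<phi> s) (U - \<phi> t)))"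
  proof -
    fix s t assume s: "s \<in> V" and t: "t \<in> V"
    have "sd (\<phi> s) (insert N (U - \<phi> t)) = insert N (sd (\<phi> s) (U - \<phi> t))"
      using phiU[OF s] NU by (auto simp: sd_def)
    moreover have "N \<notin> sd (\<phi> s) (U - \<phi> t)" using phiU[OF s] NU by (auto simp: sd_def)
    moreover have "finite (sd (\<phi> s) (U - \<phi> t))" using finU finU'[OF s] by (simp add: finite_sd)
    ultimately show "ham g (e0 s) (e1 t) = Suc (card (sd (\<phi> s) (U - \<phi> t)))"
      unfolding ham_def using g0 g1 s t by simp
  qed
  have Wcases: "\<And>a. a \<in> W \<Longrightarrow> (\<exists>s\<in>V. a = e0 s) \<or> (\<exists>s\<in>V. a = e1 s)" unfolding W_def by blast
  have finW: "finite W" unfolding W_def using finV by simp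
  have gfin: "\<And>a. a \<in> W \<Longrightarrow> finite (g a)" using Wcases g0 g1 finU finU' by fastforce
  have anti: "\<And>w w'. w \<in> V \<Longrightarrow> w' \<in> V \<Longrightarrow> conv V E {w, w'} = V \<Longrightarrow> \<phi> w' = U - \<phi> w"
  proof -
    fix w w' assume w: "w \<in> V" and w': "w' \<in> V" and c: "conv V E {w, w'} = V"
    have "U \<subseteq> sd (\<phi> w) (\<phi> w')"
    proof
      fix i assume "i \<in> U"
      then obtain z where z: "z \<in> V" "i \<in> \<phi> z" unfolding U_def by blast
      show "i \<in> sd (\<phi> w) (\<phi> w')" by (rule G.conv_all_sep[OF w w' c z(1) v0]) (use z phiv0 in auto)
    qed
    thus "\<phi> w' = U - \<phi> w" using phiU[OF w] phiU[OF w'] by (auto simp: sd_def)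
  qed
  have disj: "\<And>u v w w'. u \<in> V \<Longrightarrow> v \<in> V \<Longrightarrow> w \<in> V \<Longrightarrow> w' \<in> V \<Longrightarrow>
       {C \<in> theta_classes V E. crosses V E C (conv V E {u, w})} \<inter>
       {C \<in> theta_classes V E. crosses V E C (conv V E {v, w'})} = {} \<Longrightarrow>
       sd (\<phi> u) (\<phi> w) \<inter> sd (\<phi> v) (\<phi> w') = {}"
  proof (rule ccontr)
    fix u v w w' assume uv: "u \<in> V" "v \<in> V" "w \<in> V" "w' \<in> V"
      and e: "{C \<in> theta_classes V E. crosses V E C (conv V E {u, w})} \<inter>
       {C \<in> theta_classes V E. crosses V E C (conv V E {v, w'})} = {}"
      and ne: "sd (\<phi> u) (\<phi> w) \<inter> sd (\<phi> v) (\<phi> w') \<noteq> {}"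
    then obtain i where i: "i \<in> sd (\<phi> u) (\<phi> w)" "i \<in> sd (\<phi> v) (\<phi> w')" by blast
    obtain x y where xy: "x \<in> V" "y \<in> V" "E x y" "sd (\<phi> x) (\<phi> y) = {i}"
      using G.edge_exists[OF uv(1,3) i(1)] by blast
    let ?C = "{{a, b} | a b. a \<in> V \<and> b \<in> V \<and> E a b \<and> theta V E x y a b}"
    have "?C \<in> theta_classes V E" by (rule G.class_in[OF xy(1-3)])
    moreover have "crosses V E ?C (conv V E {u, w})" by (rule G.class_crosses[OF xy uv(1,3) i(1)])
    moreover have "crosses V E ?C (conv V E {v, w'})" by (rule G.class_crosses[OF xy uv(2,4) i(2)])
    ultimately show False using e by blast
  qed
  have edgeW: "\<And>w w'. w \<in> V \<Longrightarrow> w' \<in> V \<Longrightarrow> conv V E {w, w'} = V \<Longrightarrow> ham g (e0 w) (e1 w') = 1"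
  proof -
    fix w w' assume w: "w \<in> V" and w': "w' \<in> V" and c: "conv V E {w, w'} = V"
    have "U - \<phi> w' = \<phi> w" using anti[OF w w' c] phiU[OF w] by auto
    thus "ham g (e0 w) (e1 w') = 1" using h01[OF w w'] by simp
  qed
  have Fsym: "\<forall>a\<in>W. \<forall>b\<in>W. F a b \<longrightarrow> F b a" unfolding F_def using ham_comm by metis
  have E0F: "\<And>s t. s \<in> V \<Longrightarrow> t \<in> V \<Longrightarrow> E s t \<longleftrightarrow> F (e0 s) (e0 t)"
    unfolding F_def using G.edge_ham h00 e0W by simp
  have E1F: "\<And>s t. s \<in> V \<Longrightarrow> t \<in> V \<Longrightarrow> E s t \<longleftrightarrow> F (e1 s) (e1 t)"
    unfolding F_def using G.edge_ham h11 e1W by simp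
  have geo0: "\<And>s t. s \<in> V \<Longrightarrow> t \<in> V \<Longrightarrow> \<exists>xs. walk_betw W F (e0 s) (e0 t) xs \<and> length xs = Suc (ham g (e0 s) (e0 t))"
  proof -
    fix s t assume s: "s \<in> V" and t: "t \<in> V"
    obtain xs where xs: "walk_betw V E s t xs" "length xs = Suc (ham \<phi> s t)" using G.geo_exists s t by blast
    have w: "walk V E xs" using xs unfolding walk_betw_def by blast
    have sV: "set xs \<subseteq> V" using w walk_set by blast
    have "walk W F (map e0 xs)" by (rule walk_map[OF w]) (use sV e0W E0F in blast)+
    moreover have "xs \<noteq> []" using xs(2) by auto
    ultimately have "walk_betw W F (e0 s) (e0 t) (map e0 xs)" using xs unfolding walk_betw_def
      by (simp add: hd_map last_map)
    thus "\<exists>xs. walk_betw W F (e0 s) (e0 t) xs \<and> length xs = Suc (ham g (e0 s) (e0 t))"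
      using xs(2) h00[OF s t] by (metis length_map)
  qed
  have geo1: "\<And>s t. s \<in> V \<Longrightarrow> t \<in> V \<Longrightarrow> \<exists>xs. walk_betw W F (e1 s) (e1 t) xs \<and> length xs = Suc (ham g (e1 s) (e1 t))"
  proof -
    fix s t assume s: "s \<in> V" and t: "t \<in> V"
    obtain xs where xs: "walk_betw V E s t xs" "length xs = Suc (ham \<phi> s t)" using G.geo_exists s t by blast
    have w: "walk V E xs" using xs unfolding walk_betw_def by blast
    have sV: "set xs \<subseteq> V" using w walk_set by blast
    have "walk W F (map e1 xs)" by (rule walk_map[OF w]) (use sV e1W E1F in blast)+
    moreover have "xs \<noteq> []" using xs(2) by auto
    ultimately have "walk_betw W F (e1 s) (e1 t) (map e1 xs)" using xs unfolding walk_betw_def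
      by (simp add: hd_map last_map)
    thus "\<exists>xs. walk_betw W F (e1 s) (e1 t) xs \<and> length xs = Suc (ham g (e1 s) (e1 t))"
      using xs(2) h11[OF s t] by (metis length_map)
  qed
  have geo01: "\<And>s t. s \<in> V \<Longrightarrow> t \<in> V \<Longrightarrow> \<exists>xs. walk_betw W F (e0 s) (e1 t) xs \<and> length xs = Suc (ham g (e0 s) (e1 t))"
  proof -
    fix s t assume s: "s \<in> V" and t: "t \<in> V"
    obtain w w' where w: "w \<in> V" "w' \<in> V" "conv V E {w, w'} = V" and
      e: "{C \<in> theta_classes V E. crosses V E C (conv V E {s, w})} \<inter>
       {C \<in> theta_classes V E. crosses V E C (conv V E {t, w'})} = {}"
      using P s t by blast
    have dj: "sd (\<phi> s) (\<phi> w) \<inter> sd (\<phi> t) (\<phi> w') = {}" by (rule disj[OF s t w(1,2) e])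
    have aw: "\<phi> w' = U - \<phi> w" by (rule anti[OF w])
    obtain xs where xs: "walk_betw W F (e0 s) (e0 w) xs" "length xs = Suc (ham g (e0 s) (e0 w))"
      using geo0 s w by blast
    obtain ys where ys: "walk_betw W F (e1 w') (e1 t) ys" "length ys = Suc (ham g (e1 w') (e1 t))"
      using geo1 t w by blast
    have ed: "walk W F [e0 w, e1 w']" using edgeW[OF w] e0W e1W w unfolding F_def by simp
    have z1: "walk W F (xs @ tl [e0 w, e1 w'])" using walk_append xs ed unfolding walk_betw_def by fastforce
    have ne: "xs \<noteq> []" using xs(2) by auto
    have z2: "walk W F ((xs @ tl [e0 w, e1 w']) @ tl ys)"
      by (rule walk_append[OF z1]) (use ys ne in \<open>auto simp: walk_betw_def\<close>)
    have hdz: "hd ((xs @ tl [e0 w, e1 w']) @ tl ys) = e0 s" using xs ne unfolding walk_betw_def by simp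
    have lastz: "last ((xs @ tl [e0 w, e1 w']) @ tl ys) = e1 t" using ys unfolding walk_betw_def
      by (cases ys; cases "tl ys") auto
    have len: "length ((xs @ tl [e0 w, e1 w']) @ tl ys) = ham g (e0 s) (e0 w) + ham g (e1 w') (e1 t) + 2"
      using xs(2) ys(2) by simp
    have "sd (\<phi> s) (U - \<phi> t) = sd (\<phi> s) (\<phi> w) \<union> sd (\<phi> t) (\<phi> w')"
      using dj aw phiU[OF s] phiU[OF t] phiU[OF w(1)] unfolding sd_def by blast
    hence "card (sd (\<phi> s) (U - \<phi> t)) = ham \<phi> s w + ham \<phi> t w'"
      unfolding ham_def using dj by (simp add: card_Un_disjoint finite_sd finU' s t w)
    hence "ham g (e0 s) (e1 t) = Suc (ham g (e0 s) (e0 w) + ham g (e1 w') (e1 t))"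
      using h01[OF s t] h00[OF s w(1)] h11[OF w(2) t] ham_comm[of \<phi> t w'] by simp
    thus "\<exists>xs. walk_betw W F (e0 s) (e1 t) xs \<and> length xs = Suc (ham g (e0 s) (e1 t))"
      using z2 hdz lastz len unfolding walk_betw_def by (intro exI[of _ "(xs @ tl [e0 w, e1 w']) @ tl ys"]) simp
  qed
  have geo10: "\<And>s t. s \<in> V \<Longrightarrow> t \<in> V \<Longrightarrow> \<exists>xs. walk_betw W F (e1 s) (e0 t) xs \<and> length xs = Suc (ham g (e1 s) (e0 t))"
  proof -
    fix s t assume s: "s \<in> V" and t: "t \<in> V"
    obtain xs where xs: "walk_betw W F (e0 t) (e1 s) xs" "length xs = Suc (ham g (e0 t) (e1 s))"
      using geo01 s t by blast
    have "walk W F (rev xs)" using walk_rev Fsym xs unfolding walk_betw_def by blast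
    moreover have "xs \<noteq> []" using xs(2) by auto
    ultimately have "walk_betw W F (e1 s) (e0 t) (rev xs)" using xs unfolding walk_betw_def
      by (simp add: hd_rev last_rev)
    thus "\<exists>xs. walk_betw W F (e1 s) (e0 t) xs \<and> length xs = Suc (ham g (e1 s) (e0 t))"
      using xs(2) ham_comm[of g "e0 t" "e1 s"] by (metis length_rev)
  qed
  have geoW: "\<And>a b. a \<in> W \<Longrightarrow> b \<in> W \<Longrightarrow> \<exists>xs. walk_betw W F a b xs \<and> length xs = Suc (ham g a b)"
    using Wcases geo0 geo1 geo01 geo10 by metis
  have pcW: "pc W F g"
  proof (unfold_locales)
    show "\<forall>x\<in>W. \<not> F x x" unfolding F_def ham_def by simp
    show "\<forall>x\<in>W. \<forall>y\<in>W. F x y \<longrightarrow> F y x" by (rule Fsym)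
    show "\<forall>x\<in>W. finite (g x)" using gfin by blast
    show "\<forall>a\<in>W. \<forall>b\<in>W. is_dist W F a b (ham g a b)"
    proof (intro ballI)
      fix a b assume a: "a \<in> W" and b: "b \<in> W"
      have "\<forall>xs. walk_betw W F a b xs \<longrightarrow> Suc (ham g a b) \<le> length xs"
      proof (intro allI impI)
        fix xs assume xs: "walk_betw W F a b xs"
        have "Suc (ham g (hd xs) (last xs)) \<le> length xs"
          by (rule walk_lower_gen) (use xs gfin in \<open>auto simp: walk_betw_def F_def\<close>)
        thus "Suc (ham g a b) \<le> length xs" using xs unfolding walk_betw_def by simp
      qed
      thus "is_dist W F a b (ham g a b)" unfolding is_dist_def using geoW[OF a b] by blast
    qed
  qed
  interpret Wp: pc W F g by (rule pcW)
  have pcubeW: "partial_cube W F"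
    unfolding partial_cube_def using finW neV Wp.irr Wp.symE Wp.finphi Wp.dist W_def
    unfolding ham_def sd_def by blast
  have gsub: "\<And>z. z \<in> W \<Longrightarrow> g z \<subseteq> insert N U" using Wcases g0 g1 phiU by fastforce
  have convW: "\<And>s. s \<in> V \<Longrightarrow> conv W F {e0 s, e1 s} = W"
  proof -
    fix s assume s: "s \<in> V"
    show "conv W F {e0 s, e1 s} = W"
    proof
      show "conv W F {e0 s, e1 s} \<subseteq> W" using Wp.conv_sub e0W e1W s by auto
      show "W \<subseteq> conv W F {e0 s, e1 s}"
      proof
        fix z assume z: "z \<in> W"
        have "g (e0 s) \<inter> g (e1 s) \<subseteq> g z" "g z \<subseteq> g (e0 s) \<union> g (e1 s)"
          using g0[OF s] g1[OF s] phiU[OF s] NU gsub[OF z] by auto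
        from between_eq[OF _ _ _ this] have "ham g (e0 s) z + ham g z (e1 s) = ham g (e0 s) (e1 s)"
          unfolding ham_def using gfin z e0W e1W s by simp
        thus "z \<in> conv W F {e0 s, e1 s}" by (rule Wp.interval_conv[OF e0W[OF s] e1W[OF s] z])
      qed
    qed
  qed
  have antW: "antipodal W F"
    unfolding antipodal_def
  proof (intro conjI ballI)
    show "partial_cube W F" by (rule pcubeW)
    fix a assume a: "a \<in> W"
    from Wcases[OF a] show "\<exists>b\<in>W. conv W F {a, b} = W"
    proof
      assume "\<exists>s\<in>V. a = e0 s"
      then obtain s where "s \<in> V" "a = e0 s" by blast
      thus ?thesis using convW e1W by blast
    next
      assume "\<exists>s\<in>V. a = e1 s"
      then obtain s where "s \<in> V" "a = e1 s" by blast
      thus ?thesis using convW e0W by (metis insert_commute)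
    qed
  qed
  obtain w0 w0' where w0: "w0 \<in> V" "w0' \<in> V" "conv V E {w0, w0'} = V" using P v0 by blast
  have Fx: "F (e0 w0) (e1 w0')" unfolding F_def using edgeW[OF w0] e0W e1W w0 by simp
  have sdN: "sd (g (e0 w0)) (g (e1 w0')) = {N}"
  proof -
    have "U - \<phi> w0' = \<phi> w0" using anti[OF w0] phiU[OF w0(1)] by auto
    thus ?thesis using g0[OF w0(1)] g1[OF w0(2)] phiU[OF w0(1)] NU by (auto simp: sd_def)
  qed
  have hsW: "halfspace W F (e0 w0) (e1 w0') = e0 ` V"
  proof -
    have "halfspace W F (e0 w0) (e1 w0') = {z \<in> W. (N \<in> g z) = (N \<in> g (e0 w0))}"
      by (rule Wp.halfspace_coord[OF e0W[OF w0(1)] e1W[OF w0(2)] sdN])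
    also have "\<dots> = e0 ` V"
    proof
      show "{z \<in> W. (N \<in> g z) = (N \<in> g (e0 w0))} \<subseteq> e0 ` V"
        using Wcases g0 g1 phiU NU w0(1) by fastforce
      show "e0 ` V \<subseteq> {z \<in> W. (N \<in> g z) = (N \<in> g (e0 w0))}"
        using g0 phiU NU w0(1) e0W by fastforce
    qed
    finally show ?thesis .
  qed
  show "affine V E" unfolding affine_def
    using antW e0W e1W w0 Fx hsW inj0 E0F
    by (intro exI[of _ W] exI[of _ F] exI[of _ "e0 w0"] exI[of _ "e1 w0'"] exI[of _ e0])
       (simp add: bij_betw_def)
qed

theorem mainTheorem13:
  fixes V :: "'a set" and E :: "'a \<Rightarrow> 'a \<Rightarrow> bool"
  assumes "partial_cube V E"
  shows "affine V E \<longleftrightarrow>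
    (\<forall>u\<in>V. \<forall>v\<in>V. \<exists>w\<in>V. \<exists>w'\<in>V. conv V E {w, w'} = V \<and>
       {C \<in> theta_classes V E. crosses V E C (conv V E {u, w})} \<inter>
       {C \<in> theta_classes V E. crosses V E C (conv V E {v, w'})} = {})"
  using forward[OF assms] backward[OF assms] by blast



end
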